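(* Let $\phi_\mathcal{D}(z)$ be a power series with non-negative coefficients, $[z^0]\phi_\mathcal{D}>0$ and $[z^k]\phi_\mathcal{D}>0$ for some $k\ge2$, let $D(z)$ be the unique power series with $D(z)=z\,\phi_\mathcal{D}(D(z))$, and let $\phi(z)=1/(1-D(z))$. Types of $\phi_\mathcal{D}$ and of $\phi$ refer to the types of their coefficient sequences. (1) If $\phi_\mathcal{D}$ has type I, then $\phi$ has type I$a$ with $\nu=\infty$. (2) Suppose $\phi_\mathcal{D}$ has type II; let $\tau_\mathcal{D}$ be the radius of convergence of $\phi_\mathcal{D}$ and $\nu_\mathcal{D}=\lim_{t\uparrow\tau_\mathcal{D}}t\phi_\mathcal{D}'(t)/\phi_\mathcal{D}(t)\in(0,1)$. (a) If $\tau_\mathcal{D}<1$, then the parameter $\nu$ of $\phi$ equals $\nu=\frac{\tau_\mathcal{D}}{(1-\tau_\mathcal{D})(1-\nu_\mathcal{D})}\in(0,\infty)$. (b) If $\tau_\mathcal{D}\ge1$, then $\phi$ has type I$a$ with $\nu=\infty$. (3) If $\phi_\mathcal{D}$ has type III, then $\nu=0$, i.e. $\phi$ has type III.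
   Context: (Combinatorially, $\phi_\mathcal{D}$ is the generating series of the weighted $\textsc{SEQ}\circ\textsc{SEQ}_{\ge1}$-structures defining face-weighted dissections $D(z)$, and $\phi$ that of sequences of dissections, governing random outerplanar maps.) Types of a weight sequence $(\omega_k)_{k\ge0}$ with $\omega_0>0$ and $\omega_k>0$ for some $k\ge2$ and generating series $\Phi(z)=\sum\omega_kz^k$ of radius $\rho$: if $\rho>0$, $\Psi(t)=t\Phi'(t)/\Phi(t)$ on $[0,\rho)$ and $\nu=\lim_{t\uparrow\rho}\Psi(t)\in(0,\infty]$; if $\rho=0$, $\nu=0$. Type I: $\nu\ge1$; type I$a$: $\nu>1$; type II: $0<\nu<1$; type III: $\nu=0$. Here $\nu$ without subscript refers to $\Phi=\phi$. *)

theory Defs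
  imports "HOL-Analysis.Analysis" "HOL-Computational_Algebra.Formal_Power_Series"
begin

definition gen_series :: "(nat \<Rightarrow> real) \<Rightarrow> real \<Rightarrow> real" where
  "gen_series \<omega> t = (\<Sum>k. \<omega> k * t ^ k)"

definition Psi :: "(nat \<Rightarrow> real) \<Rightarrow> real \<Rightarrow> real" where
  "Psi \<omega> t = t * deriv (gen_series \<omega>) t / gen_series \<omega> t"

definition nu :: "(nat \<Rightarrow> real) \<Rightarrow> ereal" where
  "nu \<omega> = (if conv_radius \<omega> = 0 then 0
            else if conv_radius \<omega> = \<infinity> then Lim at_top (\<lambda>t. ereal (Psi \<omega> t))
            else Lim (at_left (real_of_ereal (conv_radius \<omega>))) (\<lambda>t. ereal (Psi \<omega> t)))"

definition typeI :: "(nat \<Rightarrow> real) \<Rightarrow> bool" where "typeI \<omega> \<longleftrightarrow> nu \<omega> \<ge> 1"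
definition typeIa :: "(nat \<Rightarrow> real) \<Rightarrow> bool" where "typeIa \<omega> \<longleftrightarrow> nu \<omega> > 1"
definition typeII :: "(nat \<Rightarrow> real) \<Rightarrow> bool" where "typeII \<omega> \<longleftrightarrow> 0 < nu \<omega> \<and> nu \<omega> < 1"
definition typeIII :: "(nat \<Rightarrow> real) \<Rightarrow> bool" where "typeIII \<omega> \<longleftrightarrow> nu \<omega> = 0"

end

theory Submission
  imports Defs
begin



lemma ennreal_suminf_swap:
  fixes u :: "nat \<Rightarrow> nat \<Rightarrow> ennreal"
  shows "(\<Sum>i. \<Sum>j. u i j) = (\<Sum>j. \<Sum>i. u i j)"
proof -
  interpret pair_sigma_finite "count_space (UNIV::nat set)" "count_space (UNIV::nat set)"
    by (simp add: pair_sigma_finite_def sigma_finite_measure_count_space)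
  have m: "(\<lambda>(i,j). u i j) \<in> borel_measurable (count_space UNIV \<Otimes>\<^sub>M count_space UNIV)"
    by (simp add: pair_measure_countable)
  have "(\<Sum>i. \<Sum>j. u i j) = (\<integral>\<^sup>+ i. \<integral>\<^sup>+ j. u i j \<partial>count_space UNIV \<partial>count_space UNIV)"
    by (simp add: nn_integral_count_space_nat)
  also have "\<dots> = (\<integral>\<^sup>+ j. \<integral>\<^sup>+ i. u i j \<partial>count_space UNIV \<partial>count_space UNIV)"
    using Fubini'[OF m] by simp
  also have "\<dots> = (\<Sum>j. \<Sum>i. u i j)"
    by (simp add: nn_integral_count_space_nat)
  finally show ?thesis .
qed

lemma ennreal_suminf_finite_sum:
  fixes w :: "nat \<Rightarrow> ennreal"
  shows "(\<Sum>i\<le>n. w i) = (\<Sum>i. if i \<le> n then w i else 0)"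
  by (subst suminf_finite[of "{..n}"]) auto

lemma ennreal_suminf_shift:
  fixes w :: "nat \<Rightarrow> ennreal"
  shows "(\<Sum>n. if i \<le> n then w (n - i) else 0) = (\<Sum>k. w k)"
proof -
  have "(\<Sum>n. if i \<le> n then w (n - i) else 0) =
        (\<Sum>j. (\<lambda>n. if i \<le> n then w (n - i) else 0) (j + i)) + (\<Sum>j<i. (\<lambda>n. if i \<le> n then w (n - i) else 0) j)"
    by (rule suminf_offset) (rule summableI)
  then show ?thesis by simp
qed

definition ES :: "(nat \<Rightarrow> real) \<Rightarrow> ennreal \<Rightarrow> ennreal" where
  "ES b x = (\<Sum>n. ennreal (b n) * x ^ n)"

definition nonneg_fps :: "real fps \<Rightarrow> bool" where
  "nonneg_fps A \<longleftrightarrow> (\<forall>n. fps_nth A n \<ge> 0)"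

lemma ES_mono: "x \<le> y \<Longrightarrow> ES b x \<le> ES b y"
  unfolding ES_def by (intro suminf_le summableI mult_left_mono power_mono) auto

lemma ES_prod:
  assumes A: "nonneg_fps A" and B: "nonneg_fps B"
  shows "ES (fps_nth (A * B)) x = ES (fps_nth A) x * ES (fps_nth B) x"
proof -
  have "ES (fps_nth (A * B)) x = (\<Sum>n. \<Sum>i\<le>n. ennreal (fps_nth A i) * x^i * (ennreal (fps_nth B (n-i)) * x^(n-i)))"
  proof (unfold ES_def, rule suminf_cong)
    fix n
    have "ennreal (fps_nth (A*B) n) = (\<Sum>i\<le>n. ennreal (fps_nth A i) * ennreal (fps_nth B (n-i)))"
      using A B unfolding nonneg_fps_def fps_mult_nth
      by (simp add: atLeast0AtMost ennreal_mult sum_nonneg flip: sum_ennreal)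
    then have "ennreal (fps_nth (A*B) n) * x^n = (\<Sum>i\<le>n. ennreal (fps_nth A i) * ennreal (fps_nth B (n-i)) * x^n)"
      by (simp add: sum_distrib_right)
    also have "\<dots> = (\<Sum>i\<le>n. ennreal (fps_nth A i) * x^i * (ennreal (fps_nth B (n-i)) * x^(n-i)))"
    proof (intro sum.cong refl)
      fix i assume "i \<in> {..n}"
      then have "x^n = x^i * x^(n-i)" by (simp flip: power_add)
      then show "ennreal (fps_nth A i) * ennreal (fps_nth B (n - i)) * x ^ n =
         ennreal (fps_nth A i) * x ^ i * (ennreal (fps_nth B (n - i)) * x ^ (n - i))"
        by (simp add: mult_ac)
    qed
    finally show "ennreal (fps_nth (A*B) n) * x^n = \<dots>" .
  qed
  also have "\<dots> = (\<Sum>n. \<Sum>i. if i \<le> n then ennreal (fps_nth A i) * x^i * (ennreal (fps_nth B (n-i)) * x^(n-i)) else 0)"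
    by (simp add: ennreal_suminf_finite_sum)
  also have "\<dots> = (\<Sum>i. \<Sum>n. if i \<le> n then ennreal (fps_nth A i) * x^i * (ennreal (fps_nth B (n-i)) * x^(n-i)) else 0)"
    by (rule ennreal_suminf_swap)
  also have "\<dots> = (\<Sum>i. ennreal (fps_nth A i) * x^i * (\<Sum>k. ennreal (fps_nth B k) * x^k))"
  proof (rule suminf_cong)
    fix i
    have "(\<Sum>n. if i \<le> n then ennreal (fps_nth A i) * x^i * (ennreal (fps_nth B (n-i)) * x^(n-i)) else 0)
        = (\<Sum>n. ennreal (fps_nth A i) * x^i * (if i \<le> n then (ennreal (fps_nth B (n-i)) * x^(n-i)) else 0))"
      by (intro suminf_cong) auto
    also have "\<dots> = ennreal (fps_nth A i) * x^i * (\<Sum>k. ennreal (fps_nth B k) * x^k)"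
      by (simp add: ennreal_suminf_shift[of i "\<lambda>k. ennreal (fps_nth B k) * x^k"])
    finally show "(\<Sum>n. if i \<le> n then ennreal (fps_nth A i) * x^i * (ennreal (fps_nth B (n-i)) * x^(n-i)) else 0)
        = ennreal (fps_nth A i) * x^i * (\<Sum>k. ennreal (fps_nth B k) * x^k)" .
  qed
  also have "\<dots> = ES (fps_nth A) x * ES (fps_nth B) x"
    unfolding ES_def by simp
  finally show ?thesis .
qed

lemma nonneg_fps_mult: "nonneg_fps A \<Longrightarrow> nonneg_fps B \<Longrightarrow> nonneg_fps (A * B)"
  unfolding nonneg_fps_def fps_mult_nth by (auto intro!: sum_nonneg)

lemma nonneg_fps_power: "nonneg_fps A \<Longrightarrow> nonneg_fps (A ^ i)"
  by (induction i) (auto simp: nonneg_fps_mult, auto simp: nonneg_fps_def)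

lemma ES_one: "ES (\<lambda>n. if n = 0 then 1 else 0) x = 1"
  unfolding ES_def by (subst suminf_finite[of "{0}"]) auto

lemma ES_power:
  assumes "nonneg_fps A"
  shows "ES (fps_nth (A ^ i)) x = ES (fps_nth A) x ^ i"
  by (induction i) (simp_all add: ES_one ES_prod nonneg_fps_power assms)

lemma fps_power_nth_below:
  fixes B :: "real fps"
  assumes "fps_nth B 0 = 0"
  shows "n < i \<Longrightarrow> fps_nth (B ^ i) n = 0"
proof (induction i arbitrary: n)
  case 0 then show ?case by simp
next
  case (Suc i)
  have "fps_nth (B ^ Suc i) n = (\<Sum>j=0..n. fps_nth B j * fps_nth (B^i) (n - j))"
    by (simp add: fps_mult_nth)
  also have "\<dots> = 0"
  proof (intro sum.neutral ballI)
    fix j assume "j \<in> {0..n}"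
    show "fps_nth B j * fps_nth (B^i) (n - j) = 0"
    proof (cases "j = 0")
      case True then show ?thesis using assms by simp
    next
      case False then have "n - j < i" using Suc.prems \<open>j \<in> {0..n}\<close> by auto
      then show ?thesis using Suc.IH by simp
    qed
  qed
  finally show ?case .
qed

lemma fps_power_nth_agree:
  fixes B C :: "real fps"
  assumes "\<And>j. j \<le> m \<Longrightarrow> fps_nth B j = fps_nth C j"
  shows "j \<le> m \<Longrightarrow> fps_nth (B ^ i) j = fps_nth (C ^ i) j"
proof (induction i arbitrary: j)
  case 0 then show ?case by simp
next
  case (Suc i)
  then show ?case using assms
    by (simp add: fps_mult_nth)
qed

lemma ES_X_mult: "ES (fps_nth (fps_X * A)) x = x * ES (fps_nth A) x"
proof -
  have "ES (fps_nth (fps_X * A)) x = (\<Sum>j. ennreal (fps_nth (fps_X * A) (j + 1)) * x^(j+1)) +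
      (\<Sum>j<1. ennreal (fps_nth (fps_X * A) j) * x^j)"
    unfolding ES_def by (intro suminf_offset summableI)
  also have "\<dots> = (\<Sum>j. x * (ennreal (fps_nth A j) * x^j))"
    by (simp add: mult_ac)
  finally show ?thesis by (simp add: ES_def)
qed

lemma ES_compose:
  assumes A: "nonneg_fps A" and B: "nonneg_fps B" and B0: "fps_nth B 0 = 0"
  shows "ES (fps_nth (A oo B)) x = ES (fps_nth A) (ES (fps_nth B) x)"
proof -
  have "ES (fps_nth (A oo B)) x = (\<Sum>n. \<Sum>i\<le>n. ennreal (fps_nth A i) * (ennreal (fps_nth (B^i) n) * x^n))"
  proof (unfold ES_def, rule suminf_cong)
    fix n
    have "ennreal (fps_nth (A oo B) n) = (\<Sum>i\<le>n. ennreal (fps_nth A i) * ennreal (fps_nth (B^i) n))"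
      using A nonneg_fps_power[OF B] unfolding nonneg_fps_def fps_compose_nth
      by (simp add: atLeast0AtMost ennreal_mult sum_nonneg flip: sum_ennreal)
    then show "ennreal (fps_nth (A oo B) n) * x^n = (\<Sum>i\<le>n. ennreal (fps_nth A i) * (ennreal (fps_nth (B^i) n) * x^n))"
      by (simp add: sum_distrib_right sum_distrib_left mult_ac)
  qed
  also have "\<dots> = (\<Sum>n. \<Sum>i. if i \<le> n then ennreal (fps_nth A i) * (ennreal (fps_nth (B^i) n) * x^n) else 0)"
    by (simp add: ennreal_suminf_finite_sum)
  also have "\<dots> = (\<Sum>i. \<Sum>n. if i \<le> n then ennreal (fps_nth A i) * (ennreal (fps_nth (B^i) n) * x^n) else 0)"
    by (rule ennreal_suminf_swap)
  also have "\<dots> = (\<Sum>i. ennreal (fps_nth A i) * ES (fps_nth (B^i)) x)"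
  proof (rule suminf_cong)
    fix i
    have "(\<Sum>n. if i \<le> n then ennreal (fps_nth A i) * (ennreal (fps_nth (B^i) n) * x^n) else 0)
        = (\<Sum>n. ennreal (fps_nth A i) * (ennreal (fps_nth (B^i) n) * x^n))"
      using fps_power_nth_below[OF B0] by (intro suminf_cong) auto
    then show "(\<Sum>n. if i \<le> n then ennreal (fps_nth A i) * (ennreal (fps_nth (B^i) n) * x^n) else 0)
        = ennreal (fps_nth A i) * ES (fps_nth (B^i)) x" unfolding ES_def by simp
  qed
  also have "\<dots> = ES (fps_nth A) (ES (fps_nth B) x)"
    unfolding ES_def[of "fps_nth A"] using ES_power[OF B] by simp
  finally show ?thesis .
qed




lemma ES_add: "nonneg_fps A \<Longrightarrow> nonneg_fps B \<Longrightarrow>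
   ES (fps_nth (A + B)) x = ES (fps_nth A) x + ES (fps_nth B) x"
  unfolding ES_def nonneg_fps_def
  by (simp add: ennreal_plus distrib_right suminf_add[OF summableI summableI, symmetric])

lemma ES_finite_real:
  assumes b: "\<And>n. b n \<ge> 0" and t: "t \<ge> 0" and fin: "ES b (ennreal t) < top"
  shows "summable (\<lambda>n. b n * t^n)" "ereal t \<le> conv_radius b"
        "ES b (ennreal t) = ennreal (gen_series b t)"
proof -
  have eq: "ES b (ennreal t) = (\<Sum>n. ennreal (b n * t^n))"
    unfolding ES_def using b t by (simp add: ennreal_mult ennreal_power)
  show s: "summable (\<lambda>n. b n * t^n)"
    using fin eq b t by (intro summable_suminf_not_top) auto
  show "ereal t \<le> conv_radius b"
    using conv_radius_geI[OF s] t by simp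
  show "ES b (ennreal t) = ennreal (gen_series b t)"
    using eq s b t unfolding gen_series_def by (simp add: suminf_ennreal2)
qed

lemma ES_in_radius:
  assumes b: "\<And>n. b n \<ge> 0" and t: "t \<ge> 0" and r: "ereal t < conv_radius b"
  shows "ES b (ennreal t) = ennreal (gen_series b t)" "summable (\<lambda>n. b n * t^n)"
proof -
  show s: "summable (\<lambda>n. b n * t^n)"
    using summable_in_conv_radius[of t b] r t by simp
  have eq: "ES b (ennreal t) = (\<Sum>n. ennreal (b n * t^n))"
    unfolding ES_def using b t by (simp add: ennreal_mult ennreal_power)
  show "ES b (ennreal t) = ennreal (gen_series b t)"
    using eq s b t unfolding gen_series_def by (simp add: suminf_ennreal2)
qed

lemma ES_trunc:
  "ES (\<lambda>j. if j < N then b j else 0) x = (\<Sum>j<N. ennreal (b j) * x^j)"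
  unfolding ES_def by (subst suminf_finite[of "{..<N}"]) auto

locale setting =
  fixes phiD D phi :: "real fps"
  assumes nonneg: "\<And>k. fps_nth phiD k \<ge> 0"
    and pos0: "fps_nth phiD 0 > 0"
    and posk: "\<exists>k\<ge>2. fps_nth phiD k > 0"
    and D_eq: "D = fps_X * (phiD oo D)"
    and phi_def: "phi = inverse (1 - D)"
begin

abbreviation "a \<equiv> fps_nth phiD"
abbreviation "d \<equiv> fps_nth D"
abbreviation "h \<equiv> fps_nth phi"

lemma d0: "d 0 = 0"
  by (subst D_eq) simp

lemma dSuc: "d (Suc n) = fps_nth (phiD oo D) n"
  by (subst D_eq) simp

lemma d1: "d 1 = a 0"
  using dSuc[of 0] by simp

lemma nonneg_phiD: "nonneg_fps phiD"
  using nonneg by (simp add: nonneg_fps_def)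

lemma d_nonneg_aux: "\<forall>j\<le>n. d j \<ge> 0"
proof (induction n)
  case 0 then show ?case using d0 by simp
next
  case (Suc n)
  define T where "T = Abs_fps (\<lambda>j. if j \<le> n then d j else 0)"
  have T: "nonneg_fps T" using Suc.IH by (auto simp: nonneg_fps_def T_def)
  have "d (Suc n) = (\<Sum>i=0..n. a i * fps_nth (D^i) n)"
    by (simp add: dSuc fps_compose_nth)
  also have "\<dots> = (\<Sum>i=0..n. a i * fps_nth (T^i) n)"
    by (intro sum.cong refl arg_cong2[where f="(*)"] fps_power_nth_agree[where m=n]) (auto simp: T_def)
  also have "\<dots> \<ge> 0"
    using nonneg_fps_power[OF T] nonneg by (auto intro!: sum_nonneg simp: nonneg_fps_def)
  finally show ?case using Suc.IH le_Suc_eq by auto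
qed

lemma d_nonneg: "d n \<ge> 0"
  using d_nonneg_aux by blast

lemma nonneg_D: "nonneg_fps D"
  using d_nonneg by (simp add: nonneg_fps_def)

lemma phi_eq: "phi = 1 + D * phi"
proof -
  have "phi * (1 - D) = 1"
    unfolding phi_def by (rule inverse_mult_eq_1) (simp add: d0)
  then show ?thesis by (simp add: algebra_simps)
qed

lemma h0: "h 0 = 1"
  by (subst phi_eq) (simp add: d0)

lemma hSuc: "h (Suc n) = (\<Sum>j=0..Suc n. d j * h (Suc n - j))"
  by (subst phi_eq) (simp add: fps_mult_nth)

lemma h_nonneg: "h n \<ge> 0"
proof (induction n rule: less_induct)
  case (less n)
  show ?case
  proof (cases n)
    case 0 then show ?thesis by (simp add: h0)
  next
    case (Suc m)
    have "(\<Sum>j=0..Suc m. d j * h (Suc m - j)) \<ge> 0"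
    proof (intro sum_nonneg)
      fix j assume "j \<in> {0..Suc m}"
      show "d j * h (Suc m - j) \<ge> 0"
      proof (cases "j = 0")
        case True then show ?thesis by (simp add: d0)
      next
        case False then show ?thesis using less.IH[of "Suc m - j"] Suc d_nonneg by simp
      qed
    qed
    then show ?thesis using Suc hSuc by simp
  qed
qed

lemma nonneg_phi: "nonneg_fps phi"
  using h_nonneg by (simp add: nonneg_fps_def)

definition G :: "ennreal \<Rightarrow> ennreal" where "G x = ES d x"
definition F :: "ennreal \<Rightarrow> ennreal" where "F x = ES a x"
definition H :: "ennreal \<Rightarrow> ennreal" where "H x = ES h x"

lemma G_eq: "G x = x * F (G x)"
proof -
  have "G x = ES (fps_nth (fps_X * (phiD oo D))) x" unfolding G_def by (subst D_eq) simp
  also have "\<dots> = x * F (G x)"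
    unfolding ES_X_mult F_def G_def by (simp add: ES_compose nonneg_phiD nonneg_D d0)
  finally show ?thesis .
qed

lemma H_eq: "H x = 1 + G x * H x"
proof -
  have n1: "nonneg_fps 1" by (simp add: nonneg_fps_def)
  have f1: "fps_nth (1::real fps) = (\<lambda>n. if n = 0 then 1 else 0)" by (rule ext) simp
  have e1: "ES (fps_nth 1) x = 1" unfolding f1 by (rule ES_one)
  have "H x = ES (fps_nth (1 + D * phi)) x"
    unfolding H_def by (rule arg_cong[OF phi_eq, of "\<lambda>p. ES (fps_nth p) x"])
  also have "\<dots> = ES (fps_nth 1) x + ES (fps_nth (D * phi)) x"
    by (rule ES_add[OF n1 nonneg_fps_mult[OF nonneg_D nonneg_phi]])
  also have "ES (fps_nth (D * phi)) x = G x * H x"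
    unfolding G_def H_def by (rule ES_prod[OF nonneg_D nonneg_phi])
  finally show ?thesis unfolding e1 .
qed

lemma F_mono: "x \<le> y \<Longrightarrow> F x \<le> F y"
  unfolding F_def by (rule ES_mono)
lemma G_mono: "x \<le> y \<Longrightarrow> G x \<le> G y"
  unfolding G_def by (rule ES_mono)
lemma H_mono: "x \<le> y \<Longrightarrow> H x \<le> H y"
  unfolding H_def by (rule ES_mono)

lemma G_lfp:
  assumes "x * F y \<le> y"
  shows "G x \<le> y"
proof -
  have "(\<Sum>n<N. ennreal (d n) * x^n) \<le> y" for N
  proof (induction N)
    case 0 then show ?case by simp
  next
    case (Suc N)
    define T where "T = Abs_fps (\<lambda>j. if j < N then d j else 0)"
    have T: "nonneg_fps T" "fps_nth T 0 = 0" by (auto simp: nonneg_fps_def T_def d_nonneg d0)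
    have agree: "fps_nth (phiD oo D) m = fps_nth (phiD oo T) m" if "m < N" for m
      unfolding fps_compose_nth
      by (intro sum.cong refl arg_cong2[where f="(*)"] fps_power_nth_agree[where m=m])
         (use that in \<open>auto simp: T_def\<close>)
    have e1: "(\<Sum>n<Suc N. ennreal (d n) * x^n) = x * (\<Sum>m<N. ennreal (fps_nth (phiD oo T) m) * x^m)"
      by (subst sum.lessThan_Suc_shift) (simp add: d0 sum_distrib_left dSuc agree mult_ac)
    have e2: "(\<Sum>m<N. ennreal (fps_nth (phiD oo T) m) * x^m) \<le> ES (fps_nth (phiD oo T)) x"
      unfolding ES_def by (rule sum_le_suminf) (auto intro: summableI)
    have e3: "ES (fps_nth (phiD oo T)) x = F (ES (fps_nth T) x)"
      unfolding F_def by (rule ES_compose[OF nonneg_phiD T])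
    have e4: "ES (fps_nth T) x = (\<Sum>j<N. ennreal (d j) * x^j)"
    proof -
      have "fps_nth T = (\<lambda>j. if j < N then d j else 0)" unfolding T_def by (rule ext) simp
      then show ?thesis by (simp add: ES_trunc)
    qed
    have e5: "F (\<Sum>j<N. ennreal (d j) * x^j) \<le> F y" using Suc.IH by (rule F_mono)
    have "(\<Sum>m<N. ennreal (fps_nth (phiD oo T) m) * x^m) \<le> F y"
      using e2 e3 e4 e5 by simp
    then have "(\<Sum>n<Suc N. ennreal (d n) * x^n) \<le> x * F y"
      unfolding e1 by (rule mult_left_mono) simp
    then show ?case using assms by (rule order.trans)
  qed
  then show ?thesis unfolding G_def ES_def
    by (rule suminf_le_const[OF summableI])
qed

lemma ES_fps_one: "ES (fps_nth 1) x = 1"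
proof -
  have f1: "fps_nth (1::real fps) = (\<lambda>n. if n = 0 then 1 else 0)" by (rule ext) simp
  show ?thesis unfolding f1 by (rule ES_one)
qed

lemma H_lfp:
  assumes G: "G x \<le> ennreal y" and y: "0 \<le> y" "y < 1"
  shows "H x \<le> ennreal (1 / (1 - y))"
proof -
  define c where "c = 1 / (1 - y)"
  have c: "c \<ge> 0" "1 + y * c = c" using y by (auto simp: c_def field_simps)
  have n1: "nonneg_fps 1" by (simp add: nonneg_fps_def)
  have "(\<Sum>n<N. ennreal (h n) * x^n) \<le> ennreal c" for N
  proof (induction N)
    case 0 then show ?case by simp
  next
    case (Suc N)
    define T where "T = Abs_fps (\<lambda>j. if j < N then h j else 0)"
    have T: "nonneg_fps T" by (auto simp: nonneg_fps_def T_def h_nonneg)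
    have agree: "h n = fps_nth (1 + D * T) n" if "n < Suc N" for n
    proof -
      have "h n = fps_nth (1 + D * phi) n" by (subst phi_eq) simp
      also have "\<dots> = fps_nth (1 + D * T) n"
        unfolding fps_add_nth fps_mult_nth
      proof (intro arg_cong2[where f="(+)"] refl sum.cong)
        fix j assume "j \<in> {0..n}"
        then show "d j * h (n - j) = d j * fps_nth T (n - j)"
          using that by (cases "j = 0") (auto simp: T_def d0)
      qed
      finally show ?thesis .
    qed
    have e1: "(\<Sum>n<Suc N. ennreal (h n) * x^n) = (\<Sum>n<Suc N. ennreal (fps_nth (1 + D * T) n) * x^n)"
      by (intro sum.cong refl) (simp add: agree)
    have e2: "(\<Sum>n<Suc N. ennreal (fps_nth (1 + D * T) n) * x^n) \<le> ES (fps_nth (1 + D * T)) x"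
      unfolding ES_def by (rule sum_le_suminf) (auto intro: summableI)
    have e3: "ES (fps_nth (1 + D * T)) x = 1 + G x * ES (fps_nth T) x"
      unfolding G_def
      by (simp only: ES_add[OF n1 nonneg_fps_mult[OF nonneg_D T]] ES_prod[OF nonneg_D T] ES_fps_one)
    have e4: "ES (fps_nth T) x = (\<Sum>j<N. ennreal (h j) * x^j)"
    proof -
      have "fps_nth T = (\<lambda>j. if j < N then h j else 0)" unfolding T_def by (rule ext) simp
      then show ?thesis by (simp add: ES_trunc)
    qed
    have e5: "G x * ES (fps_nth T) x \<le> ennreal y * ennreal c"
      unfolding e4 using G Suc.IH by (intro mult_mono) auto
    have e6: "1 + ennreal y * ennreal c = ennreal c"
    proof -
      have "ennreal (1 + y * c) = ennreal 1 + ennreal (y * c)"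
        by (rule ennreal_plus) (use c y in auto)
      also have "ennreal (y * c) = ennreal y * ennreal c"
        by (rule ennreal_mult) (use c y in auto)
      finally have "1 + ennreal y * ennreal c = ennreal (1 + y * c)" by simp
      then show ?thesis using c by simp
    qed
    have "1 + G x * ES (fps_nth T) x \<le> ennreal c"
      using e5 e6 by (metis add_left_mono)
    then show ?case using e1 e2 e3 by simp
  qed
  then show ?thesis unfolding H_def ES_def c_def[symmetric]
    by (rule suminf_le_const[OF summableI])
qed

end



lemma conv_radius_diffs_ge: "conv_radius (b :: nat \<Rightarrow> real) \<le> conv_radius (diffs b)"
proof -
  have "fps_conv_radius (Abs_fps b) \<le> fps_conv_radius (fps_deriv (Abs_fps b))"
    by (rule fps_conv_radius_deriv)
  moreover have "fps_nth (fps_deriv (Abs_fps b)) = diffs b"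
    by (rule ext) (simp add: fps_deriv_def diffs_def)
  ultimately show ?thesis by (simp add: fps_conv_radius_def)
qed

lemma gs_deriv:
  assumes "ereal \<bar>y\<bar> < conv_radius b"
  shows "(gen_series b has_real_derivative gen_series (diffs b) y) (at y)"
proof -
  have "((\<lambda>z. \<Sum>n. b n * z ^ n) has_field_derivative (\<Sum>n. diffs b n * y ^ n)) (at y within UNIV)"
    using assms by (intro has_field_derivative_powser) simp
  then show ?thesis unfolding gen_series_def by simp
qed

lemma gs_deriv2:
  assumes "ereal \<bar>y\<bar> < conv_radius b"
  shows "(gen_series (diffs b) has_real_derivative gen_series (diffs (diffs b)) y) (at y)"
  using assms conv_radius_diffs_ge[of b] by (intro gs_deriv) auto

lemma gs_isCont: "ereal \<bar>y\<bar> < conv_radius b \<Longrightarrow> isCont (gen_series b) y"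
  using gs_deriv DERIV_isCont by blast

lemma gs_isCont_diffs: "ereal \<bar>y\<bar> < conv_radius b \<Longrightarrow> isCont (gen_series (diffs b)) y"
  using gs_deriv2 DERIV_isCont by blast

lemma gs_summable: "ereal \<bar>y\<bar> < conv_radius b \<Longrightarrow> summable (\<lambda>n. b n * y^n)"
  using summable_in_conv_radius[of y b] by simp

lemma gs_summable_diffs: "ereal \<bar>y\<bar> < conv_radius b \<Longrightarrow> summable (\<lambda>n. diffs b n * y^n)"
  using conv_radius_diffs_ge[of b] by (intro gs_summable) auto

lemma diffs_nonneg: "(\<And>n. b n \<ge> 0) \<Longrightarrow> diffs b n \<ge> (0::real)"
  by (simp add: diffs_def)

lemma gs_term_le:
  assumes b: "\<And>n. b n \<ge> 0" and y: "0 \<le> y" "ereal y < conv_radius b"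
  shows "b n * y^n \<le> gen_series b y"
proof -
  have "(\<Sum>i\<in>{n}. b i * y^i) \<le> (\<Sum>i. b i * y^i)"
    using gs_summable[of y b] y b by (intro sum_le_suminf) auto
  then show ?thesis unfolding gen_series_def by simp
qed

lemma gs_nonneg:
  assumes b: "\<And>n. b n \<ge> 0" and y: "0 \<le> y" "ereal y < conv_radius b"
  shows "gen_series b y \<ge> 0"
  unfolding gen_series_def using b y gs_summable[of y b] by (intro suminf_nonneg) auto

lemma gs_mono:
  assumes b: "\<And>n. b n \<ge> 0" and xy: "0 \<le> x" "x \<le> y" "ereal y < conv_radius b"
  shows "gen_series b x \<le> gen_series b y"
proof -
  have "ereal x < conv_radius b" using xy by (meson ereal_less_eq(3) order.strict_trans1)
  then show ?thesis
    unfolding gen_series_def using xy b gs_summable[of x b] gs_summable[of y b]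
    by (intro suminf_le) (auto intro!: mult_left_mono power_mono)
qed

definition PA :: "(nat \<Rightarrow> real) \<Rightarrow> real \<Rightarrow> real" where
  "PA b y = y * gen_series (diffs b) y / gen_series b y"

lemma Psi_eq_PA:
  assumes "ereal \<bar>y\<bar> < conv_radius b"
  shows "Psi b y = PA b y"
  unfolding Psi_def PA_def using DERIV_imp_deriv[OF gs_deriv[OF assms]] by simp

lemma Q_sums:
  assumes "ereal \<bar>y\<bar> < conv_radius b"
  shows "(\<lambda>n. real n * b n * y^n) sums (y * gen_series (diffs b) y)"
proof -
  have "(\<lambda>n. diffs b n * y^n) sums gen_series (diffs b) y"
    unfolding gen_series_def using gs_summable_diffs[OF assms] by (rule summable_sums)
  then have "(\<lambda>n. y * (diffs b n * y^n)) sums (y * gen_series (diffs b) y)"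
    by (rule sums_mult)
  then have "(\<lambda>n. (\<lambda>n. real n * b n * y^n) (Suc n)) sums (y * gen_series (diffs b) y)"
    by (simp add: diffs_def mult_ac)
  then show ?thesis by (subst (asm) sums_Suc_iff) simp
qed

lemma pow_cross_le:
  fixes y1 y2 :: real
  assumes "0 \<le> y1" "y1 \<le> y2" "m \<le> n"
  shows "y1^n * y2^m \<le> y2^n * y1^m"
proof -
  obtain k where n: "n = m + k" using assms(3) le_Suc_ex by blast
  have "y1^n * y2^m = (y1*y2)^m * y1^k" by (simp add: n power_add power_mult_distrib mult_ac)
  also have "\<dots> \<le> (y1*y2)^m * y2^k" using assms by (intro mult_left_mono power_mono) auto
  also have "\<dots> = y2^n * y1^m" by (simp add: n power_add power_mult_distrib mult_ac)
  finally show ?thesis .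
qed

lemma pair_term_nonneg:
  fixes y1 y2 :: real
  assumes "0 \<le> y1" "y1 \<le> y2"
  shows "(real n - real m) * (y2^n * y1^m - y1^n * y2^m) \<ge> 0"
proof (cases "m \<le> n")
  case True
  then show ?thesis using pow_cross_le[OF assms True] by simp
next
  case False
  then have "n \<le> m" by simp
  from pow_cross_le[OF assms this] have "y2^n * y1^m \<le> y1^n * y2^m" by (simp add: mult.commute)
  then show ?thesis using False
    by (intro mult_nonpos_nonpos) auto
qed

lemma finite_cross_ineq:
  fixes y1 y2 :: real
  assumes b: "\<And>n. b n \<ge> 0" and y: "0 \<le> y1" "y1 \<le> y2"
  shows "(\<Sum>n<N. real n * b n * y1^n) * (\<Sum>n<N. b n * y2^n) \<le>
         (\<Sum>n<N. real n * b n * y2^n) * (\<Sum>n<N. b n * y1^n)"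
proof -
  define c where "c n m = real n * b n * b m * (y2^n * y1^m - y1^n * y2^m)" for n m
  have S: "(\<Sum>n<N. real n * b n * y2^n) * (\<Sum>n<N. b n * y1^n) -
           (\<Sum>n<N. real n * b n * y1^n) * (\<Sum>n<N. b n * y2^n) = (\<Sum>n<N. \<Sum>m<N. c n m)"
  proof -
    have "(\<Sum>n<N. real n * b n * y2^n) * (\<Sum>n<N. b n * y1^n) -
           (\<Sum>n<N. real n * b n * y1^n) * (\<Sum>n<N. b n * y2^n) =
      (\<Sum>n<N. \<Sum>m<N. (real n * b n * y2^n) * (b m * y1^m) - (real n * b n * y1^n) * (b m * y2^m))"
      by (simp only: sum_product sum_subtractf)
    also have "\<dots> = (\<Sum>n<N. \<Sum>m<N. c n m)"
      by (intro sum.cong refl) (simp add: c_def algebra_simps)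
    finally show ?thesis .
  qed
  have sw: "(\<Sum>n<N. \<Sum>m<N. c m n) = (\<Sum>n<N. \<Sum>m<N. c n m)" by (rule sum.swap)
  have "2 * (\<Sum>n<N. \<Sum>m<N. c n m) = (\<Sum>n<N. \<Sum>m<N. c n m) + (\<Sum>n<N. \<Sum>m<N. c m n)"
    unfolding sw by simp
  also have "\<dots> = (\<Sum>n<N. \<Sum>m<N. b n * b m * ((real n - real m) * (y2^n * y1^m - y1^n * y2^m)))"
    by (simp add: c_def sum.distrib[symmetric] algebra_simps)
  also have "\<dots> \<ge> 0"
    using b pair_term_nonneg[OF y] by (intro sum_nonneg) (metis mult_nonneg_nonneg)
  finally have "(\<Sum>n<N. \<Sum>m<N. c n m) \<ge> 0" by simp
  with S show ?thesis by simp
qed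

lemma PA_mono:
  assumes b: "\<And>n. b n \<ge> 0" and b0: "b 0 > 0"
    and y: "0 \<le> y1" "y1 \<le> y2" "ereal y2 < conv_radius b"
  shows "PA b y1 \<le> PA b y2"
proof -
  have r1: "ereal \<bar>y1\<bar> < conv_radius b" using y le_less_trans[of "ereal y1" "ereal y2"] by simp
  have r2: "ereal \<bar>y2\<bar> < conv_radius b" using y by simp
  define Q where "Q y = y * gen_series (diffs b) y" for y
  have P1: "(\<lambda>N. \<Sum>n<N. b n * y1^n) \<longlonglongrightarrow> gen_series b y1"
    unfolding gen_series_def by (intro summable_LIMSEQ gs_summable r1)
  have P2: "(\<lambda>N. \<Sum>n<N. b n * y2^n) \<longlonglongrightarrow> gen_series b y2"
    unfolding gen_series_def by (intro summable_LIMSEQ gs_summable r2)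
  have Q1: "(\<lambda>N. \<Sum>n<N. real n * b n * y1^n) \<longlonglongrightarrow> Q y1"
    using Q_sums[OF r1] unfolding Q_def sums_def .
  have Q2: "(\<lambda>N. \<Sum>n<N. real n * b n * y2^n) \<longlonglongrightarrow> Q y2"
    using Q_sums[OF r2] unfolding Q_def sums_def .
  have ineq: "Q y1 * gen_series b y2 \<le> Q y2 * gen_series b y1"
    using finite_cross_ineq[OF b y(1,2)]
    by (intro LIMSEQ_le[OF tendsto_mult[OF Q1 P2] tendsto_mult[OF Q2 P1]]) auto
  have pos1: "gen_series b y1 > 0"
    using gs_term_le[where b=b and n=0 and y=y1] b y r1 b0 by simp
  have pos2: "gen_series b y2 > 0"
    using gs_term_le[where b=b and n=0 and y=y2] b y r2 b0 by simp
  show ?thesis unfolding PA_def Q_def[symmetric]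
    using ineq pos1 pos2 by (simp add: field_simps)
qed




context setting begin

abbreviation "f \<equiv> gen_series a"
abbreviation "g \<equiv> gen_series d"
abbreviation "hh \<equiv> gen_series h"
abbreviation "\<tau> \<equiv> conv_radius a"
abbreviation "\<rho> \<equiv> conv_radius d"
abbreviation "\<rho>h \<equiv> conv_radius h"
abbreviation "g' \<equiv> gen_series (diffs d)"

lemma a0: "a 0 > 0" using pos0 .

lemma g_basic:
  assumes "0 \<le> t" "ereal t < \<rho>"
  shows "G (ennreal t) = ennreal (g t)" "g t \<ge> 0"
  using ES_in_radius[of d t] gs_nonneg[of d t] assms d_nonneg unfolding G_def by auto

lemma g_ge: "0 \<le> t \<Longrightarrow> ereal t < \<rho> \<Longrightarrow> a 0 * t \<le> g t"
  using gs_term_le[where b=d and n=1 and y=t] d_nonneg d1 by simp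

lemma g_strict:
  assumes st: "0 \<le> s" "s < t" and t: "ereal t < \<rho>"
  shows "g s < g t"
proof -
  have ts: "ereal s < \<rho>" using st t le_less_trans[of "ereal s" "ereal t"] by simp
  have ss: "summable (\<lambda>n. d n * s^n)" "summable (\<lambda>n. d n * t^n)"
    using gs_summable[of s d] gs_summable[of t d] st t ts by auto
  have "g t - g s = (\<Sum>n. d n * t^n - d n * s^n)"
    unfolding gen_series_def using ss by (simp add: suminf_diff)
  also have "\<dots> \<ge> (\<Sum>n\<in>{1}. d n * t^n - d n * s^n)"
    using ss st d_nonneg
    by (intro sum_le_suminf summable_diff) (auto intro!: mult_left_mono power_mono simp: algebra_simps)
  finally have "g t - g s \<ge> a 0 * (t - s)" using d1 by (simp add: algebra_simps)
  moreover have "a 0 * (t - s) > 0" using a0 st by simp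
  ultimately show ?thesis by simp
qed

lemma g_fix:
  assumes t: "0 < t" "ereal t < \<rho>"
  shows "ereal (g t) \<le> \<tau>" "g t = t * f (g t)" "F (ennreal (g t)) = ennreal (f (g t))"
proof -
  have Gt: "G (ennreal t) = ennreal (g t)" "g t \<ge> 0" using g_basic t by auto
  have eq: "ennreal (g t) = ennreal t * F (ennreal (g t))"
    using G_eq[of "ennreal t"] Gt by simp
  have fin: "F (ennreal (g t)) < top"
  proof (rule ccontr)
    assume "\<not> F (ennreal (g t)) < top"
    then have "F (ennreal (g t)) = top" using top.not_eq_extremum by blast
    then show False using eq t by (simp add: ennreal_mult_top)
  qed
  then have fin': "ES a (ennreal (g t)) < top" unfolding F_def .
  show "ereal (g t) \<le> \<tau>" using ES_finite_real(2)[OF nonneg Gt(2) fin'] .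
  show F: "F (ennreal (g t)) = ennreal (f (g t))"
    using ES_finite_real(3)[OF nonneg Gt(2) fin'] unfolding F_def .
  have fnn: "f (g t) \<ge> 0"
    using ES_finite_real(1)[OF nonneg Gt(2) fin'] nonneg Gt(2) unfolding gen_series_def
    by (intro suminf_nonneg) auto
  have "ennreal (g t) = ennreal (t * f (g t))"
    using eq F t fnn by (simp add: ennreal_mult)
  then show "g t = t * f (g t)" using Gt(2) t fnn by (simp add: ennreal_inj)
qed

lemma g_lt_tau:
  assumes t: "0 < t" "ereal t < \<rho>"
  shows "ereal (g t) < \<tau>"
proof -
  obtain t' where t': "ereal t < ereal t'" "ereal t' < \<rho>" using ereal_dense2[OF t(2)] by blast
  have "g t < g t'" using g_strict t t' by auto
  moreover have "ereal (g t') \<le> \<tau>" using g_fix[of t'] t t' by auto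
  ultimately show ?thesis by (meson ereal_less_eq(3) order.strict_trans2 less_ereal.simps(1))
qed

lemma g_pos: "0 < t \<Longrightarrow> ereal t < \<rho> \<Longrightarrow> g t > 0"
  using g_strict[of 0 t] gen_series_def d0 by (simp add: gen_series_def)

lemma f_ge: "0 \<le> y \<Longrightarrow> ereal y < \<tau> \<Longrightarrow> a 0 \<le> f y"
  using gs_term_le[where b=a and n=0 and y=y] nonneg by simp

lemma h_ES: "0 \<le> t \<Longrightarrow> ereal t < \<rho>h \<Longrightarrow> H (ennreal t) = ennreal (hh t)"
  using ES_in_radius[of h t] h_nonneg unfolding H_def by auto

lemma H_ge1: "H x \<ge> 1"
  using H_eq[of x] by (metis add.commute add_increasing2 order_refl zero_le)

lemma rhoh_facts:
  assumes t: "0 \<le> t" "ereal t < \<rho>h"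
  shows "ereal t < \<rho>" "g t < 1" "hh t = 1 / (1 - g t)"
proof -
  have le: "ereal s \<le> \<rho>" if s: "0 \<le> s" "ereal s < \<rho>h" for s
  proof -
    have Hs: "H (ennreal s) = ennreal (hh s)" using h_ES s by auto
    have "G (ennreal s) \<le> G (ennreal s) * H (ennreal s)"
      using H_ge1[of "ennreal s"] by (metis mult.right_neutral mult_left_mono zero_le)
    also have "\<dots> \<le> H (ennreal s)" using H_eq[of "ennreal s"] by (metis add.commute le_iff_add)
    also have "\<dots> < top" using Hs by simp
    finally have "ES d (ennreal s) < top" unfolding G_def .
    then show ?thesis using ES_finite_real(2)[OF d_nonneg s(1)] by simp
  qed
  obtain t' where t': "ereal t < ereal t'" "ereal t' < \<rho>h" using ereal_dense2[OF t(2)] by blast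
  have t'r: "ereal t' \<le> \<rho>" using le[of t'] t t' by auto
  show rt: "ereal t < \<rho>" using order.strict_trans2[OF t'(1) t'r] .
  have Gt: "G (ennreal t) = ennreal (g t)" "g t \<ge> 0" using g_basic t rt by auto
  have Ht: "H (ennreal t) = ennreal (hh t)" using h_ES t by auto
  have hnn: "hh t \<ge> 0" using gs_nonneg[of h t] h_nonneg t by auto
  have "ennreal (hh t) = 1 + ennreal (g t) * ennreal (hh t)"
    using H_eq[of "ennreal t"] Gt Ht by simp
  also have "\<dots> = ennreal (1 + g t * hh t)"
  proof -
    have "ennreal (1 + g t * hh t) = ennreal 1 + ennreal (g t * hh t)"
      by (rule ennreal_plus) (use Gt hnn in auto)
    also have "ennreal (g t * hh t) = ennreal (g t) * ennreal (hh t)"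
      by (rule ennreal_mult) (use Gt hnn in auto)
    finally show ?thesis by simp
  qed
  finally have eq0: "ennreal (hh t) = ennreal (1 + g t * hh t)" .
  have eq: "hh t = 1 + g t * hh t"
    by (rule ennreal_inj[THEN iffD1, OF hnn _ eq0]) (use Gt hnn in auto)
  then have "hh t \<ge> 1" using Gt hnn by (metis le_add_same_cancel1 mult_nonneg_nonneg)
  then show g1: "g t < 1" using eq
    by (smt (verit, best) mult_cancel_right1 mult_le_cancel_right1)
  show "hh t = 1 / (1 - g t)" using eq g1 by (simp add: field_simps)
qed

lemma rhoh_le: "\<rho>h \<le> \<rho>"
proof (rule ccontr)
  assume "\<not> \<rho>h \<le> \<rho>"
  then have lt: "\<rho> < \<rho>h" by simp
  then obtain r where r: "\<rho> = ereal r" using conv_radius_nonneg[of d]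
    by (cases \<rho>) auto
  have "r \<ge> 0" using conv_radius_nonneg[of d] r by simp
  then have "ereal r < \<rho>" using rhoh_facts(1)[of r] lt r by simp
  then show False using r by simp
qed

lemma rhoh_ge:
  assumes t: "0 \<le> t" "ereal t < \<rho>" "g t < 1"
  shows "ereal t \<le> \<rho>h"
proof -
  have Gt: "G (ennreal t) = ennreal (g t)" "g t \<ge> 0" using g_basic t by auto
  have "H (ennreal t) \<le> ennreal (1 / (1 - g t))" using H_lfp[of "ennreal t" "g t"] Gt t by simp
  then have "ES h (ennreal t) < top" unfolding H_def using le_less_trans by fastforce
  then show ?thesis using ES_finite_real(2)[OF h_nonneg t(1)] by simp
qed

lemma tau0:
  assumes "\<tau> = 0"
  shows "\<rho> = 0" "\<rho>h = 0"
proof -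
  show r0: "\<rho> = 0"
  proof (rule ccontr)
    assume "\<rho> \<noteq> 0"
    then have "0 < \<rho>" using conv_radius_nonneg[of d] by simp
    then obtain t where t: "ereal 0 < ereal t" "ereal t < \<rho>" using ereal_dense2 by (metis zero_ereal_def)
    then have "ereal (g t) < \<tau>" using g_lt_tau by simp
    moreover have "g t > 0" using g_pos t by simp
    ultimately show False using assms by simp
  qed
  show "\<rho>h = 0" using rhoh_le r0 conv_radius_nonneg[of h] by simp
qed

lemma rhoh_pos:
  assumes "\<tau> > 0"
  shows "\<rho>h > 0"
proof -
  have "0 < min \<tau> 1" using assms by simp
  then obtain y where y: "ereal 0 < ereal y" "ereal y < min \<tau> 1"
    using ereal_dense2 by (metis zero_ereal_def)
  then have y1: "0 < y" "y < 1" "ereal y < \<tau>" by (auto simp: one_ereal_def)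
  have fy: "f y \<ge> a 0" using f_ge y1 by simp
  then have fpos: "f y > 0" using a0 by simp
  define t where "t = y / f y"
  have tpos: "t > 0" using y1 fpos by (simp add: t_def)
  have Fy: "F (ennreal y) = ennreal (f y)" using ES_in_radius[of a y] nonneg y1 unfolding F_def by simp
  have "ennreal t * F (ennreal y) = ennreal (t * f y)" using Fy tpos fpos by (simp add: ennreal_mult)
  also have "t * f y = y" using fpos by (simp add: t_def)
  finally have "G (ennreal t) \<le> ennreal y" by (intro G_lfp) simp
  then have "H (ennreal t) \<le> ennreal (1 / (1 - y))" using H_lfp y1 by simp
  then have "ES h (ennreal t) < top" unfolding H_def using le_less_trans by fastforce
  then have "ereal t \<le> \<rho>h" using ES_finite_real(2)[OF h_nonneg] tpos by simp
  then show ?thesis using tpos by (meson ereal_less(2) order.strict_trans2 zero_less_real_of_ereal)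
qed

lemma rho_fin: "\<rho> \<noteq> \<infinity>"
proof
  assume inf: "\<rho> = \<infinity>"
  obtain K where K: "K \<ge> 2" "a K > 0" using posk by blast
  define c where "c = a K * a 0 ^ (K - 1)"
  have cpos: "c > 0" using K a0 by (simp add: c_def)
  define t where "t = 1 + 1 / c"
  have "1 / c > 0" using cpos by simp
  then have t1: "t \<ge> 1" "t > 0" unfolding t_def by linarith+
  have tr: "ereal t < \<rho>" using inf by simp
  define y where "y = g t"
  have ypos: "y > 0" using g_pos t1 tr by (simp add: y_def)
  have yfix: "y = t * f y" using g_fix(2)[OF t1(2) tr] by (simp add: y_def)
  have ytau: "ereal y < \<tau>" using g_lt_tau t1 tr by (simp add: y_def)
  have fK: "a K * y^K \<le> f y" using gs_term_le[where b=a and n=K and y=y] nonneg ypos ytau by simp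
  have yge: "a 0 * t \<le> y" using g_ge t1 tr by (simp add: y_def)
  obtain m where m: "K = Suc m" using K by (cases K) auto
  have s1: "y \<ge> t * (a K * y^K)" using yfix fK t1 by (metis mult_left_mono less_le)
  have "y * (t * a K * y^m) = t * (a K * y^K)" by (simp add: m mult_ac)
  then have "y * (t * a K * y^m) \<le> y * 1" using s1 by (simp only: mult_1_right)
  then have s2: "t * a K * y^m \<le> 1" using ypos by (simp only: mult_le_cancel_left_pos)
  have "(a 0 * t)^m \<le> y^m" using yge a0 t1 by (intro power_mono) auto
  then have "t * a K * (a 0 * t)^m \<le> t * a K * y^m"
    using t1 K by (intro mult_left_mono) auto
  also have "t * a K * (a 0 * t)^m = c * t^K"
    by (simp add: c_def m power_mult_distrib mult_ac)
  finally have s3: "c * t^K \<le> 1" using s2 by simp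
  have "t^1 \<le> t^K" using t1 m by (intro power_increasing) auto
  then have "c * t \<le> c * t^K" using cpos by simp
  then have "c * t \<le> 1" using s3 by simp
  moreover have "c * t = c + 1" using cpos by (simp add: t_def field_simps)
  ultimately show False using cpos by simp
qed

end



context setting begin

lemma gd_ge:
  assumes t: "0 \<le> t" "ereal t < \<rho>"
  shows "g' t \<ge> a 0"
proof -
  have "ereal t < conv_radius (diffs d)" using t conv_radius_diffs_ge[of d] by (meson order.strict_trans2)
  then have "diffs d 0 * t^0 \<le> g' t"
    using gs_term_le[where b="diffs d" and n=0 and y=t] diffs_nonneg[of d] d_nonneg t by blast
  moreover have "d (Suc 0) = a 0" using d1 by simp
  ultimately show ?thesis by (simp add: diffs_def)
qed

lemma g_deriv_facts:
  assumes t: "0 < t" "ereal t < \<rho>"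
  shows "(g has_real_derivative g' t) (at t)"
    and "f (g t) = g' t * (1 - PA a (g t))"
    and "PA a (g t) < 1"
    and "PA a (g t) = t * gen_series (diffs a) (g t)"
proof -
  have dg: "(g has_real_derivative g' t) (at t)" using gs_deriv[of t d] t by simp
  then show "(g has_real_derivative g' t) (at t)" .
  define u where "u = g t"
  have u: "u > 0" "ereal u < \<tau>" using g_pos g_lt_tau t by (auto simp: u_def)
  have fu: "f u \<ge> a 0" using f_ge u by simp
  then have fupos: "f u > 0" using a0 by simp
  have ufix: "u = t * f u" using g_fix(2)[OF t] by (simp add: u_def)
  define fa' where "fa' = gen_series (diffs a)"
  obtain t' where t': "ereal t < ereal t'" "ereal t' < \<rho>" using ereal_dense2[OF t(2)] by blast
  have df: "(f has_real_derivative fa' u) (at (g t))" using gs_deriv[of u a] u by (simp add: fa'_def u_def)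
  have dfg: "((\<lambda>s. f (g s)) has_real_derivative fa' u * g' t) (at t)"
    by (rule DERIV_chain2[OF df dg])
  have dm: "((\<lambda>s. s * f (g s)) has_real_derivative (1 * f (g t) + fa' u * g' t * t)) (at t)"
    by (rule DERIV_mult[OF DERIV_ident dfg])
  have dm2: "(g has_real_derivative (1 * f (g t) + fa' u * g' t * t)) (at t)"
  proof (rule has_field_derivative_transform_within_open[OF dm, of "{0<..<t'}"])
    show "open {0<..<t'}" by simp
    show "t \<in> {0<..<t'}" using t t' by simp
    fix s assume s: "s \<in> {0<..<t'}"
    then have "ereal s < \<rho>" using t' le_less_trans[of "ereal s" "ereal t'"] by simp
    then show "s * f (g s) = g s" using g_fix(2)[of s] s by simp
  qed
  have eq: "g' t = f u + fa' u * g' t * t" using DERIV_unique[OF dg dm2] by (simp add: u_def)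
  have pa: "PA a u = t * fa' u"
  proof -
    have "PA a u = u * fa' u / f u" by (simp add: PA_def fa'_def)
    also have "\<dots> = t * fa' u" using fupos by (subst ufix) (simp add: field_simps)
    finally show ?thesis .
  qed
  then show "PA a (g t) = t * gen_series (diffs a) (g t)" by (simp add: u_def fa'_def)
  have e2: "f u = g' t * (1 - PA a u)" using eq pa by (simp add: algebra_simps)
  then show "f (g t) = g' t * (1 - PA a (g t))" by (simp add: u_def)
  have gpos: "g' t > 0" using gd_ge[of t] t a0 by simp
  have "g' t * (1 - PA a u) > 0" using e2 fupos by simp
  then have "1 - PA a u > 0" using gpos by (simp add: zero_less_mult_iff)
  then show "PA a (g t) < 1" by (simp add: u_def)
qed

lemma Psi_h_formula:
  assumes t: "0 < t" "ereal t < \<rho>h"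
  shows "Psi h t = t * g' t / (1 - g t)"
proof -
  have tr: "ereal t < \<rho>" using rhoh_facts(1) t by simp
  have g1: "g t < 1" using rhoh_facts(2) t by simp
  obtain t' where t': "ereal t < ereal t'" "ereal t' < \<rho>h" using ereal_dense2[OF t(2)] by blast
  have dg: "(g has_real_derivative g' t) (at t)" using g_deriv_facts(1)[OF t(1) tr] .
  have d1: "((\<lambda>s. 1 - g s) has_real_derivative (0 - g' t)) (at t)"
    by (rule DERIV_diff[OF DERIV_const dg])
  have d2: "((\<lambda>s. inverse (1 - g s)) has_real_derivative
       - (inverse (1 - g t) * (0 - g' t) * inverse (1 - g t))) (at t)"
    by (rule DERIV_inverse'[OF d1]) (use g1 in simp)
  have d3: "(hh has_real_derivative - (inverse (1 - g t) * (0 - g' t) * inverse (1 - g t))) (at t)"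
  proof (rule has_field_derivative_transform_within_open[OF d2, of "{0<..<t'}"])
    show "open {0<..<t'}" by simp
    show "t \<in> {0<..<t'}" using t t' by simp
    fix s assume s: "s \<in> {0<..<t'}"
    then have "ereal s < \<rho>h" using t' le_less_trans[of "ereal s" "ereal t'"] by simp
    then show "inverse (1 - g s) = hh s" using rhoh_facts(3)[of s] s by (simp add: inverse_eq_divide)
  qed
  have hht: "hh t = inverse (1 - g t)" using rhoh_facts(3)[of t] t by (simp add: inverse_eq_divide)
  have "Psi h t = t * (- (inverse (1 - g t) * (0 - g' t) * inverse (1 - g t))) / inverse (1 - g t)"
    unfolding Psi_def using DERIV_imp_deriv[OF d3] hht by simp
  also have "\<dots> = t * g' t / (1 - g t)"
  proof -
    define w where "w = 1 - g t"
    have w: "w \<noteq> 0" using g1 by (simp add: w_def)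
    have "t * (- (inverse w * (0 - g' t) * inverse w)) / inverse w = t * g' t / w"
      using w by (simp add: field_simps)
    then show ?thesis by (simp add: w_def)
  qed
  finally show ?thesis .
qed

end



lemma mono_tendsto_left_ereal:
  fixes f :: "real \<Rightarrow> real"
  assumes b: "0 < b" and m: "\<And>x y. 0 < x \<Longrightarrow> x \<le> y \<Longrightarrow> y < b \<Longrightarrow> f x \<le> f y"
  shows "((\<lambda>x. ereal (f x)) \<longlongrightarrow> (SUP x\<in>{0<..<b}. ereal (f x))) (at_left b)"
proof (rule order_tendstoI)
  fix y assume "y < (SUP x\<in>{0<..<b}. ereal (f x))"
  then obtain x0 where x0: "x0 \<in> {0<..<b}" "y < ereal (f x0)" by (auto simp: less_SUP_iff)
  have "eventually (\<lambda>x. x \<in> {x0<..<b}) (at_left b)" using x0 by (intro eventually_at_left_real) auto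
  then show "eventually (\<lambda>x. y < ereal (f x)) (at_left b)"
  proof (rule eventually_mono)
    fix x assume "x \<in> {x0<..<b}"
    then have "f x0 \<le> f x" using m x0 by auto
    then show "y < ereal (f x)" using x0 by (meson ereal_less_eq(3) order.strict_trans2)
  qed
next
  fix y assume y: "y > (SUP x\<in>{0<..<b}. ereal (f x))"
  have "eventually (\<lambda>x. x \<in> {0<..<b}) (at_left b)" using b by (intro eventually_at_left_real) auto
  then show "eventually (\<lambda>x. ereal (f x) < y) (at_left b)"
  proof (rule eventually_mono)
    fix x assume "x \<in> {0<..<b}"
    then have "ereal (f x) \<le> (SUP x\<in>{0<..<b}. ereal (f x))" by (intro SUP_upper)
    then show "ereal (f x) < y" using y by simp
  qed
qed

lemma mono_tendsto_top_ereal: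
  fixes f :: "real \<Rightarrow> real"
  assumes m: "\<And>x y. 0 < x \<Longrightarrow> x \<le> y \<Longrightarrow> f x \<le> f y"
  shows "((\<lambda>x. ereal (f x)) \<longlongrightarrow> (SUP x\<in>{0<..}. ereal (f x))) at_top"
proof (rule order_tendstoI)
  fix y assume "y < (SUP x\<in>{0<..}. ereal (f x))"
  then obtain x0 where x0: "x0 \<in> {0<..}" "y < ereal (f x0)" by (auto simp: less_SUP_iff)
  have "eventually (\<lambda>x. x > x0) at_top" using eventually_gt_at_top[of x0] by simp
  then show "eventually (\<lambda>x. y < ereal (f x)) at_top"
  proof (rule eventually_mono)
    fix x assume "x > x0"
    then have "f x0 \<le> f x" using m x0 by auto
    then show "y < ereal (f x)" using x0 by (meson ereal_less_eq(3) order.strict_trans2)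
  qed
next
  fix y assume y: "y > (SUP x\<in>{0<..}. ereal (f x))"
  have "eventually (\<lambda>x::real. x > 0) at_top" using eventually_gt_at_top[of "0::real"] by simp
  then show "eventually (\<lambda>x. ereal (f x) < y) at_top"
  proof (rule eventually_mono)
    fix x :: real assume "x > 0"
    then have "ereal (f x) \<le> (SUP x\<in>{0<..}. ereal (f x))" by (intro SUP_upper) auto
    then show "ereal (f x) < y" using y by simp
  qed
qed

lemma mono_tendsto_left_real:
  fixes g :: "real \<Rightarrow> real"
  assumes r: "0 < r" and m: "\<And>x y. 0 < x \<Longrightarrow> x \<le> y \<Longrightarrow> y < r \<Longrightarrow> g x \<le> g y"
    and B: "\<And>x. 0 < x \<Longrightarrow> x < r \<Longrightarrow> g x \<le> B"
  shows "(g \<longlongrightarrow> (SUP x\<in>{0<..<r}. g x)) (at_left r)"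
proof -
  have bdd: "bdd_above (g ` {0<..<r})" by (intro bdd_aboveI[where M=B]) (use B in auto)
  have ne: "{0<..<r} \<noteq> {}" using r by simp
  show ?thesis
  proof (rule order_tendstoI)
    fix y assume "y < (SUP x\<in>{0<..<r}. g x)"
    then obtain x0 where x0: "x0 \<in> {0<..<r}" "y < g x0" using less_cSUP_iff[OF ne bdd] by auto
    have "eventually (\<lambda>x. x \<in> {x0<..<r}) (at_left r)" using x0 by (intro eventually_at_left_real) auto
    then show "eventually (\<lambda>x. y < g x) (at_left r)"
    proof (rule eventually_mono)
      fix x assume "x \<in> {x0<..<r}"
      then have "g x0 \<le> g x" using m x0 by auto
      then show "y < g x" using x0 by simp
    qed
  next
    fix y assume y: "y > (SUP x\<in>{0<..<r}. g x)"
    have "eventually (\<lambda>x. x \<in> {0<..<r}) (at_left r)" using r by (intro eventually_at_left_real) auto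
    then show "eventually (\<lambda>x. g x < y) (at_left r)"
      by (rule eventually_mono) (use cSUP_upper[OF _ bdd] y in force)
  qed
qed

context setting begin

lemma g_mono_le: "0 \<le> s \<Longrightarrow> s \<le> t \<Longrightarrow> ereal t < \<rho> \<Longrightarrow> g s \<le> g t"
  using g_strict[of s t] by (cases "s = t") auto

lemma Psi_h_inf_A:
  assumes r: "0 < r" "ereal r \<le> \<rho>h" and lim: "(g \<longlongrightarrow> 1) (at_left r)"
  shows "filterlim (Psi h) at_top (at_left r)"
proof -
  have ev: "eventually (\<lambda>t. t \<in> {0<..<r}) (at_left r)" using r by (intro eventually_at_left_real) auto
  have tr: "ereal t < \<rho>h" if "t \<in> {0<..<r}" for t
    using that r(2) by (meson ereal_less_eq(3) greaterThanLessThan_iff order.strict_trans2 less_ereal.simps(1))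
  have "filterlim (\<lambda>t. 1 - g t) (at_right 0) (at_left r)"
  proof (rule tendsto_imp_filterlim_at_right)
    show "((\<lambda>t. 1 - g t) \<longlongrightarrow> 0) (at_left r)" using tendsto_diff[OF tendsto_const lim, of 1] by simp
    show "eventually (\<lambda>t. 1 - g t > 0) (at_left r)"
      using ev by (rule eventually_mono) (use rhoh_facts(2) tr in force)
  qed
  then have inv: "filterlim (\<lambda>t. inverse (1 - g t)) at_top (at_left r)"
    by (rule filterlim_compose[OF filterlim_inverse_at_top_right])
  have "filterlim (\<lambda>t. (t * a 0) * inverse (1 - g t)) at_top (at_left r)"
    by (rule filterlim_tendsto_pos_mult_at_top[OF _ _ inv])
       (auto intro!: tendsto_eq_intros simp: r a0)
  moreover have "eventually (\<lambda>t. (t * a 0) * inverse (1 - g t) \<le> Psi h t) (at_left r)"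
    using ev
  proof (rule eventually_mono)
    fix t assume t: "t \<in> {0<..<r}"
    have trr: "ereal t < \<rho>" using rhoh_facts(1) tr t by simp
    have g1: "g t < 1" using rhoh_facts(2) tr t by simp
    have "a 0 \<le> g' t" using gd_ge[of t] t trr by simp
    then have "t * a 0 / (1 - g t) \<le> t * g' t / (1 - g t)"
      using t g1 by (intro divide_right_mono mult_left_mono) auto
    then show "(t * a 0) * inverse (1 - g t) \<le> Psi h t"
      using Psi_h_formula[of t] t tr by (simp add: divide_inverse)
  qed
  ultimately show ?thesis by (rule filterlim_at_top_mono)
qed

lemma Psi_h_inf_B:
  assumes r: "0 < r" "ereal r \<le> \<rho>h" and lim: "((\<lambda>t. PA a (g t)) \<longlongrightarrow> c) (at_left r)" and c: "c \<ge> 1"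
  shows "filterlim (Psi h) at_top (at_left r)"
proof -
  have ev: "eventually (\<lambda>t. t \<in> {0<..<r}) (at_left r)" using r by (intro eventually_at_left_real) auto
  have tr: "ereal t < \<rho>h" if "t \<in> {0<..<r}" for t
    using that r(2) by (meson ereal_less_eq(3) greaterThanLessThan_iff order.strict_trans2 less_ereal.simps(1))
  have trr: "ereal t < \<rho>" if "t \<in> {0<..<r}" for t using rhoh_facts(1) tr that by simp
  have pos: "eventually (\<lambda>t. 1 - PA a (g t) > 0) (at_left r)"
    using ev by (rule eventually_mono) (use g_deriv_facts(3) trr in force)
  have l2: "((\<lambda>t. 1 - PA a (g t)) \<longlongrightarrow> 1 - c) (at_left r)" by (intro tendsto_intros lim)
  have "0 \<le> 1 - c"
    by (rule tendsto_lowerbound[OF l2]) (use pos in \<open>auto elim: eventually_mono\<close>)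
  then have c1: "c = 1" using c by simp
  have "filterlim (\<lambda>t. 1 - PA a (g t)) (at_right 0) (at_left r)"
    using l2 pos c1 by (intro tendsto_imp_filterlim_at_right) auto
  then have inv: "filterlim (\<lambda>t. inverse (1 - PA a (g t))) at_top (at_left r)"
    by (rule filterlim_compose[OF filterlim_inverse_at_top_right])
  have "filterlim (\<lambda>t. (t * a 0) * inverse (1 - PA a (g t))) at_top (at_left r)"
    by (rule filterlim_tendsto_pos_mult_at_top[OF _ _ inv])
       (auto intro!: tendsto_eq_intros simp: r a0)
  moreover have "eventually (\<lambda>t. (t * a 0) * inverse (1 - PA a (g t)) \<le> Psi h t) (at_left r)"
    using ev
  proof (rule eventually_mono)
    fix t assume t: "t \<in> {0<..<r}"
    have g1: "g t < 1" using rhoh_facts(2) tr t by simp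
    have g0: "g t > 0" using g_pos t trr by simp
    have u: "g t > 0" "ereal (g t) < \<tau>" using g_pos g_lt_tau t trr by auto
    have fg: "a 0 \<le> f (g t)" using f_ge u by simp
    have p: "1 - PA a (g t) > 0" using g_deriv_facts(3) t trr by simp
    have gd: "g' t = f (g t) / (1 - PA a (g t))" using g_deriv_facts(2)[of t] t trr p by simp
    have "t * a 0 * inverse (1 - PA a (g t)) \<le> t * g' t"
      unfolding gd using fg t p by (simp add: divide_inverse mult_right_mono)
    also have "t * g' t \<le> t * g' t / (1 - g t)"
    proof -
      have "t * g' t \<ge> 0" using gd_ge[of t] t trr a0 by simp
      then have "t * g' t * (1 - g t) \<le> t * g' t" using g0 by (intro mult_left_le) auto
      then show ?thesis using g1 g0 by (simp add: le_divide_eq)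
    qed
    also have "\<dots> = Psi h t" using Psi_h_formula[of t] t tr by simp
    finally show "(t * a 0) * inverse (1 - PA a (g t)) \<le> Psi h t" .
  qed
  ultimately show ?thesis by (rule filterlim_at_top_mono)
qed

end



context setting begin

lemma PA_fun: "PA b = (\<lambda>y. y * gen_series (diffs b) y / gen_series b y)"
  by (rule ext) (simp add: PA_def)

lemma PA_isCont:
  assumes "0 < y" "ereal y < \<tau>"
  shows "isCont (PA a) y"
proof -
  have fy: "f y > 0" using f_ge[of y] assms a0 by simp
  have "isCont (\<lambda>y. y * gen_series (diffs a) y / f y) y"
    using assms fy gs_isCont[of y a] gs_isCont_diffs[of y a]
    by (intro continuous_intros) auto
  then show ?thesis by (simp add: PA_fun)
qed

lemma PA_nonneg: "0 \<le> y \<Longrightarrow> ereal y < \<tau> \<Longrightarrow> PA a y \<ge> 0"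
proof -
  assume y: "0 \<le> y" "ereal y < \<tau>"
  have "gen_series (diffs a) y \<ge> 0"
    using gs_nonneg[of "diffs a" y] diffs_nonneg[of a] nonneg y conv_radius_diffs_ge[of a]
    by (meson order.strict_trans2)
  moreover have "f y \<ge> 0" using gs_nonneg[of a y] nonneg y by simp
  ultimately show ?thesis using y by (simp add: PA_def)
qed

lemma PA_pos: "0 < y \<Longrightarrow> ereal y < \<tau> \<Longrightarrow> PA a y > 0"
proof -
  assume y: "0 < y" "ereal y < \<tau>"
  obtain K where K: "K \<ge> 2" "a K > 0" using posk by blast
  obtain m where m: "K = Suc m" using K by (cases K) auto
  have r: "ereal y < conv_radius (diffs a)" using y conv_radius_diffs_ge[of a] by (meson order.strict_trans2)
  have dn: "\<And>n. diffs a n \<ge> 0" using diffs_nonneg[of a] nonneg by blast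
  have "diffs a m * y^m \<le> gen_series (diffs a) y"
    using gs_term_le[where b="diffs a" and n=m and y=y, OF dn] y r by simp
  moreover have "diffs a m * y^m > 0" using K m y by (simp add: diffs_def)
  ultimately have "gen_series (diffs a) y > 0" by simp
  moreover have "f y > 0" using f_ge[of y] y a0 by simp
  ultimately show ?thesis using y by (simp add: PA_def)
qed

lemma nu_a_finite:
  assumes T: "\<tau> = ereal T" "T > 0"
  shows "((\<lambda>y. ereal (PA a y)) \<longlongrightarrow> nu a) (at_left T)"
    "nu a = (SUP y\<in>{0<..<T}. ereal (PA a y))"
proof -
  have lim: "((\<lambda>y. ereal (PA a y)) \<longlongrightarrow> (SUP y\<in>{0<..<T}. ereal (PA a y))) (at_left T)"
    using T by (intro mono_tendsto_left_ereal PA_mono nonneg a0) auto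
  have ev: "eventually (\<lambda>y. y \<in> {0<..<T}) (at_left T)" using T by (intro eventually_at_left_real) auto
  have "eventually (\<lambda>y. ereal (PA a y) = ereal (Psi a y)) (at_left T)"
    using ev by (rule eventually_mono) (use T Psi_eq_PA[of _ a] in auto)
  then have lim2: "((\<lambda>y. ereal (Psi a y)) \<longlongrightarrow> (SUP y\<in>{0<..<T}. ereal (PA a y))) (at_left T)"
    using lim by (rule tendsto_cong[THEN iffD1])
  have "nu a = Lim (at_left T) (\<lambda>t. ereal (Psi a t))" using T by (simp add: nu_def)
  also have "\<dots> = (SUP y\<in>{0<..<T}. ereal (PA a y))" by (rule tendsto_Lim[OF _ lim2]) simp
  finally show "nu a = (SUP y\<in>{0<..<T}. ereal (PA a y))" .
  then show "((\<lambda>y. ereal (PA a y)) \<longlongrightarrow> nu a) (at_left T)" using lim by simp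
qed

lemma nu_a_top:
  assumes T: "\<tau> = \<infinity>"
  shows "nu a = (SUP y\<in>{0<..}. ereal (PA a y))"
proof -
  have lim: "((\<lambda>y. ereal (PA a y)) \<longlongrightarrow> (SUP y\<in>{0<..}. ereal (PA a y))) at_top"
    using T by (intro mono_tendsto_top_ereal PA_mono nonneg a0) auto
  have "eventually (\<lambda>y. ereal (PA a y) = ereal (Psi a y)) at_top"
    using eventually_gt_at_top[of "0::real"] by (rule eventually_mono) (use T Psi_eq_PA[of _ a] in auto)
  then have lim2: "((\<lambda>y. ereal (Psi a y)) \<longlongrightarrow> (SUP y\<in>{0<..}. ereal (PA a y))) at_top"
    using lim by (rule tendsto_cong[THEN iffD1])
  have "nu a = Lim at_top (\<lambda>t. ereal (Psi a t))" using T by (simp add: nu_def)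
  also have "\<dots> = (SUP y\<in>{0<..}. ereal (PA a y))" by (rule tendsto_Lim[OF _ lim2]) simp
  finally show ?thesis .
qed

lemma nu_a_pos: "\<tau> > 0 \<Longrightarrow> nu a > 0"
proof -
  assume tp: "\<tau> > 0"
  show ?thesis
  proof (cases \<tau>)
    case (real T)
    then have T: "T > 0" using tp by simp
    have "ereal (PA a (T/2)) \<le> nu a" unfolding nu_a_finite(2)[OF real T] using T by (intro SUP_upper) auto
    moreover have "PA a (T/2) > 0" using PA_pos[of "T/2"] T real by simp
    ultimately show ?thesis by (meson ereal_less(2) order.strict_trans2 zero_less_real_of_ereal)
  next
    case PInf
    have "ereal (PA a 1) \<le> nu a" unfolding nu_a_top[OF PInf] by (intro SUP_upper) auto
    moreover have "PA a 1 > 0" using PA_pos[of 1] PInf by simp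
    ultimately show ?thesis by (meson ereal_less(2) order.strict_trans2 zero_less_real_of_ereal)
  next
    case MInf then show ?thesis using tp by simp
  qed
qed

lemma PA_le_nu: "\<tau> = ereal T \<Longrightarrow> 0 < y \<Longrightarrow> y < T \<Longrightarrow> ereal (PA a y) \<le> nu a"
  using nu_a_finite(2)[of T] by (auto intro: SUP_upper)

end



locale spos = setting +
  assumes tpos: "conv_radius (fps_nth phiD) > 0"
begin

definition "r = real_of_ereal \<rho>h"
definition "L = (SUP t\<in>{0<..<r}. g t)"

lemma r_facts: "\<rho>h = ereal r" "r > 0"
proof -
  have "\<rho>h \<noteq> \<infinity>" using rhoh_le rho_fin by auto
  moreover have "\<rho>h > 0" using rhoh_pos tpos by simp
  ultimately show "\<rho>h = ereal r" "r > 0" unfolding r_def by (cases \<rho>h; auto)+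
qed

lemma in_r:
  assumes "t \<in> {0<..<r}"
  shows "ereal t < \<rho>h" "ereal t < \<rho>" "g t < 1" "0 < t" "g t > 0" "ereal (g t) < \<tau>"
proof -
  show 1: "ereal t < \<rho>h" using assms r_facts by simp
  show 2: "ereal t < \<rho>" using rhoh_facts(1)[OF _ 1] assms by simp
  show "g t < 1" using rhoh_facts(2)[OF _ 1] assms by simp
  show "0 < t" using assms by simp
  show "g t > 0" using g_pos[OF _ 2] assms by simp
  show "ereal (g t) < \<tau>" using g_lt_tau[OF _ 2] assms by simp
qed

lemma ev_r: "eventually (\<lambda>t. t \<in> {0<..<r}) (at_left r)"
  using r_facts by (intro eventually_at_left_real) auto

lemma gL: "(g \<longlongrightarrow> L) (at_left r)"
  unfolding L_def
proof (rule mono_tendsto_left_real[where B=1])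
  show "0 < r" using r_facts by simp
  fix x y assume "0 < x" "x \<le> y" "y < r"
  then show "g x \<le> g y" using g_mono_le in_r(2)[of y] by simp
next
  fix x assume "0 < x" "x < r"
  then show "g x \<le> 1" using in_r(3)[of x] by simp
qed

lemma L_facts: "0 < L" "L \<le> 1" "ereal L \<le> \<tau>"
proof -
  have "L \<le> 1"
    by (rule tendsto_upperbound[OF gL]) (use ev_r in_r(3) in \<open>auto elim!: eventually_mono intro: less_imp_le\<close>)
  then show "L \<le> 1" .
  have "g (r/2) \<le> L" unfolding L_def using r_facts in_r(3)
    by (intro cSUP_upper bdd_aboveI[where M=1]) (auto intro: less_imp_le)
  moreover have "g (r/2) > 0" using in_r(5)[of "r/2"] r_facts by simp
  ultimately show "0 < L" by simp
  have "((\<lambda>t. ereal (g t)) \<longlongrightarrow> ereal L) (at_left r)" using gL by simp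
  then show "ereal L \<le> \<tau>"
    by (rule tendsto_upperbound) (use ev_r in_r(6) in \<open>auto elim!: eventually_mono intro: less_imp_le\<close>)
qed

lemma caseB:
  assumes L1: "L < 1"
  shows "\<rho> = ereal r"
proof (rule ccontr)
  assume ne: "\<rho> \<noteq> ereal r"
  then have rr: "ereal r < \<rho>" using rhoh_le r_facts by simp
  have cont: "isCont g r" using gs_isCont[of r d] rr r_facts by simp
  then have "(g \<longlongrightarrow> g r) (at r)" by (simp add: isCont_def)
  then have l1: "(g \<longlongrightarrow> g r) (at_left r)" by (rule filterlim_at_split[THEN iffD1, THEN conjunct1])
  have "L = g r" using tendsto_unique[OF _ gL l1] by simp
  then have gr: "g r < 1" using L1 by simp
  have "eventually (\<lambda>s. g s < 1) (at r)" using \<open>(g \<longlongrightarrow> g r) (at r)\<close> gr by (rule order_tendstoD)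
  then have e1: "eventually (\<lambda>s. g s < 1) (at_right r)" by (simp add: eventually_at_split)
  obtain r' where r': "ereal r < ereal r'" "ereal r' < \<rho>" using ereal_dense2[OF rr] by blast
  have e2: "eventually (\<lambda>s. s \<in> {r<..<r'}) (at_right r)" using r' by (intro eventually_at_right_real) simp
  obtain s where s: "g s < 1" "s \<in> {r<..<r'}"
    using eventually_happens[OF eventually_conj[OF e1 e2]] by auto
  have "ereal s < \<rho>" using s r' le_less_trans[of "ereal s" "ereal r'"] by simp
  then have "ereal s \<le> \<rho>h" using rhoh_ge[of s] s r_facts by simp
  then show False using s r_facts by simp
qed

lemma caseC:
  assumes L1: "L < 1" and Lt: "ereal L < \<tau>"
  shows "PA a L \<ge> 1" "((\<lambda>t. PA a (g t)) \<longlongrightarrow> PA a L) (at_left r)"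
proof -
  have rr: "\<rho> = ereal r" using caseB L1 by simp
  have L0: "0 < L" using L_facts by simp
  have fL: "f L > 0" using f_ge[of L] L0 Lt a0 by simp
  define T where "T y = y / f y" for y
  have Tg: "T (g t) = t" if "t \<in> {0<..<r}" for t
  proof -
    have "g t = t * f (g t)" using g_fix(2)[of t] in_r[OF that] by simp
    moreover have "f (g t) > 0" using f_ge[of "g t"] in_r[OF that] a0 by simp
    ultimately show ?thesis unfolding T_def by (simp add: field_simps)
  qed
  have cT: "isCont T L" unfolding T_def using gs_isCont[of L a] L0 Lt fL
    by (intro continuous_intros) auto
  have lim1: "((\<lambda>t. T (g t)) \<longlongrightarrow> T L) (at_left r)" by (rule isCont_tendsto_compose[OF cT gL])
  have "eventually (\<lambda>t. t = T (g t)) (at_left r)" using ev_r by (rule eventually_mono) (simp add: Tg)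
  then have lim2: "((\<lambda>t. T (g t)) \<longlongrightarrow> r) (at_left r)"
    by (rule tendsto_cong[THEN iffD1]) (rule tendsto_ident_at)
  have TL: "T L = r" using tendsto_unique[OF _ lim1 lim2] by simp
  show "PA a L \<ge> 1"
  proof (rule ccontr)
    assume "\<not> PA a L \<ge> 1"
    then have P1: "PA a L < 1" by simp
    define fa' where "fa' = gen_series (diffs a)"
    have dT: "(T has_real_derivative (1 * f L - L * fa' L) / (f L * f L)) (at L)"
      unfolding T_def fa'_def using gs_deriv[of L a] L0 Lt fL
      by (intro DERIV_divide DERIV_ident) auto
    have "PA a L = L * fa' L / f L" by (simp add: PA_def fa'_def)
    then have "1 * f L - L * fa' L = f L * (1 - PA a L)" using fL by (simp add: field_simps)
    then have "(1 * f L - L * fa' L) / (f L * f L) > 0" using fL P1 by simp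
    from DERIV_pos_inc_right[OF dT this] obtain \<delta> where \<delta>: "\<delta> > 0"
      "\<And>h. h > 0 \<Longrightarrow> h < \<delta> \<Longrightarrow> T L < T (L + h)" by blast
    obtain y0 where y0: "ereal L < ereal y0" "ereal y0 < \<tau>" using ereal_dense2[OF Lt] by blast
    define hh0 where "hh0 = min (\<delta>/2) ((y0 - L)/2)"
    have m1: "hh0 \<le> \<delta>/2" "hh0 \<le> (y0 - L)/2" unfolding hh0_def by (rule min.cobounded1, rule min.cobounded2)
    have "hh0 > 0" using \<delta>(1) y0 by (simp add: hh0_def)
    then have hh0: "hh0 > 0" "hh0 < \<delta>" "L + hh0 < y0" using m1 \<delta>(1) y0 by auto
    define y where "y = L + hh0"
    have yt: "ereal y < \<tau>" using hh0 y0 le_less_trans[of "ereal y" "ereal y0"] by (simp add: y_def)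
    have ypos: "y > 0" using L0 hh0 by (simp add: y_def)
    have fy: "f y > 0" using f_ge[of y] ypos yt a0 by simp
    have Ty: "T y > r" using \<delta>(2)[OF hh0(1,2)] TL by (simp add: y_def)
    define ts where "ts = T y"
    have tspos: "ts > 0" using Ty r_facts by (simp add: ts_def)
    have Fy: "F (ennreal y) = ennreal (f y)" using ES_in_radius[of a y] nonneg ypos yt unfolding F_def by simp
    have "ennreal ts * F (ennreal y) = ennreal (ts * f y)" using Fy tspos fy by (simp add: ennreal_mult)
    also have "ts * f y = y" using fy by (simp add: ts_def T_def)
    finally have "G (ennreal ts) \<le> ennreal y" by (intro G_lfp) simp
    then have "ES d (ennreal ts) < top" unfolding G_def using le_less_trans by fastforce
    then have "ereal ts \<le> \<rho>" using ES_finite_real(2)[OF d_nonneg] tspos by simp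
    then show False using rr Ty by (simp add: ts_def)
  qed
  show "((\<lambda>t. PA a (g t)) \<longlongrightarrow> PA a L) (at_left r)"
    by (rule isCont_tendsto_compose[OF PA_isCont gL]) (use L0 Lt in auto)
qed

lemma caseD:
  assumes L1: "L < 1" and Lt: "ereal L = \<tau>"
  shows "((\<lambda>t. ereal (PA a (g t))) \<longlongrightarrow> nu a) (at_left r)"
    and "nu a < 1 \<Longrightarrow> ((\<lambda>t. Psi h t) \<longlongrightarrow> L / ((1 - L) * (1 - real_of_ereal (nu a)))) (at_left r)"
proof -
  have L0: "0 < L" using L_facts by simp
  have nl: "((\<lambda>y. ereal (PA a y)) \<longlongrightarrow> nu a) (at_left L)" using nu_a_finite(1)[OF Lt[symmetric] L0] .
  have fl: "filterlim g (at_left L) (at_left r)"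
    by (rule tendsto_imp_filterlim_at_left[OF gL]) (use ev_r in_r(6) Lt[symmetric] in \<open>auto elim!: eventually_mono\<close>)
  show lim: "((\<lambda>t. ereal (PA a (g t))) \<longlongrightarrow> nu a) (at_left r)"
    by (rule filterlim_compose[OF nl fl])
  assume nu1: "nu a < 1"
  have "nu a \<ge> 0"
  proof (rule tendsto_lowerbound[OF lim])
    show "eventually (\<lambda>t. 0 \<le> ereal (PA a (g t))) (at_left r)"
      using ev_r
    proof (rule eventually_mono)
      fix t assume t: "t \<in> {0<..<r}"
      show "0 \<le> ereal (PA a (g t))" using PA_nonneg[of "g t"] in_r[OF t] by simp
    qed
  qed simp
  then obtain n0 where n0: "nu a = ereal n0" "0 \<le> n0" "n0 < 1" using nu1 by (cases "nu a") auto
  have limr: "((\<lambda>t. PA a (g t)) \<longlongrightarrow> n0) (at_left r)" using lim n0 by simp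
  have eq: "eventually (\<lambda>t. g t / ((1 - PA a (g t)) * (1 - g t)) = Psi h t) (at_left r)"
    using ev_r
  proof (rule eventually_mono)
    fix t assume t: "t \<in> {0<..<r}"
    have p: "1 - PA a (g t) > 0" using g_deriv_facts(3)[of t] in_r[OF t] by simp
    have gd: "g' t = f (g t) / (1 - PA a (g t))" using g_deriv_facts(2)[of t] in_r[OF t] p by simp
    have fg: "f (g t) = g t / t" using g_fix(2)[of t] in_r[OF t] by (simp add: field_simps)
    have g1: "1 - g t > 0" using in_r(3)[OF t] by simp
    have tg: "t * g' t = g t / (1 - PA a (g t))"
      unfolding gd fg using in_r(4)[OF t] by simp
    have "Psi h t = t * g' t / (1 - g t)" using Psi_h_formula[of t] in_r[OF t] by simp
    also have "\<dots> = g t / ((1 - PA a (g t)) * (1 - g t))" unfolding tg by (simp add: divide_divide_eq_left)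
    finally show "g t / ((1 - PA a (g t)) * (1 - g t)) = Psi h t" by simp
  qed
  have "((\<lambda>t. g t / ((1 - PA a (g t)) * (1 - g t))) \<longlongrightarrow> L / ((1 - n0) * (1 - L))) (at_left r)"
    using n0 L1 by (intro tendsto_intros gL limr) auto
  then have "((\<lambda>t. Psi h t) \<longlongrightarrow> L / ((1 - n0) * (1 - L))) (at_left r)"
    using eq by (rule tendsto_cong[THEN iffD1, rotated])
  then show "((\<lambda>t. Psi h t) \<longlongrightarrow> L / ((1 - L) * (1 - real_of_ereal (nu a)))) (at_left r)"
    using n0 by (simp add: mult.commute)
qed

end



context spos begin

lemma nu_h_Lim: "nu h = Lim (at_left r) (\<lambda>t. ereal (Psi h t))"
  using r_facts by (simp add: nu_def)

lemma nu_h_inf: "filterlim (Psi h) at_top (at_left r) \<Longrightarrow> nu h = \<infinity>"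
  unfolding nu_h_Lim by (rule tendsto_Lim) (simp_all add: tendsto_PInfty_eq_at_top)

lemma nu_h_val: "(Psi h \<longlongrightarrow> v) (at_left r) \<Longrightarrow> nu h = ereal v"
  unfolding nu_h_Lim by (rule tendsto_Lim) simp_all

lemma r_le: "ereal r \<le> \<rho>h" using r_facts by simp

lemma L_lt1_inf:
  assumes L1: "L < 1" and Lt: "ereal L < \<tau>"
  shows "nu h = \<infinity>"
  using caseC[OF L1 Lt] by (intro nu_h_inf Psi_h_inf_B[OF _ r_le]) (auto simp: r_facts)

lemma L_eq1_inf:
  assumes L1: "L = 1"
  shows "nu h = \<infinity>"
  using gL L1 by (intro nu_h_inf Psi_h_inf_A[OF _ r_le]) (auto simp: r_facts)

lemma R1: "nu a \<ge> 1 \<Longrightarrow> nu h = \<infinity>"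
proof -
  assume nu1: "nu a \<ge> 1"
  consider "L = 1" | "L < 1" "ereal L < \<tau>" | "L < 1" "ereal L = \<tau>"
    using L_facts by force
  then show ?thesis
  proof cases
    case 1 then show ?thesis by (rule L_eq1_inf)
  next
    case 2 then show ?thesis by (rule L_lt1_inf)
  next
    case 3
    have lim: "((\<lambda>t. ereal (PA a (g t))) \<longlongrightarrow> nu a) (at_left r)" using caseD(1)[OF 3] .
    have "nu a \<le> 1"
    proof (rule tendsto_upperbound[OF lim])
      show "eventually (\<lambda>t. ereal (PA a (g t)) \<le> 1) (at_left r)"
        using ev_r
      proof (rule eventually_mono)
        fix t assume t: "t \<in> {0<..<r}"
        show "ereal (PA a (g t)) \<le> 1" using g_deriv_facts(3)[of t] in_r[OF t] by simp
      qed
    qed simp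
    then have "nu a = 1" using nu1 by simp
    then have "((\<lambda>t. PA a (g t)) \<longlongrightarrow> 1) (at_left r)" using lim by (simp add: one_ereal_def)
    then show ?thesis by (intro nu_h_inf Psi_h_inf_B[OF _ r_le]) (auto simp: r_facts)
  qed
qed

lemma R2:
  assumes nu: "nu a < 1" and t1: "\<tau> < 1"
  shows "nu h = ereal (real_of_ereal \<tau> / ((1 - real_of_ereal \<tau>) * (1 - real_of_ereal (nu a))))"
proof -
  have L1: "L < 1" using L_facts t1 by (metis ereal_less_eq(3) less_ereal.simps(1) one_ereal_def order.strict_trans1)
  have Lt: "ereal L = \<tau>"
  proof (rule ccontr)
    assume "ereal L \<noteq> \<tau>"
    then have Lt: "ereal L < \<tau>" using L_facts by simp
    obtain T where T: "\<tau> = ereal T" using t1 tpos by (cases \<tau>) auto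
    have "PA a L \<ge> 1" using caseC(1)[OF L1 Lt] .
    moreover have "ereal (PA a L) \<le> nu a" using PA_le_nu[OF T] L_facts Lt T by simp
    ultimately show False using nu by (metis ereal_less_eq(3) not_le one_ereal_def order.strict_trans1)
  qed
  have "nu h = ereal (L / ((1 - L) * (1 - real_of_ereal (nu a))))"
    by (rule nu_h_val) (rule caseD(2)[OF L1 Lt nu])
  then show ?thesis using Lt[symmetric] by simp
qed

lemma R3:
  assumes t1: "\<tau> \<ge> 1"
  shows "nu h = \<infinity>"
proof (cases "L = 1")
  case True then show ?thesis by (rule L_eq1_inf)
next
  case False
  then have L1: "L < 1" using L_facts by simp
  then have "ereal L < \<tau>" using t1 by (metis ereal_less_eq(3) less_ereal.simps(1) one_ereal_def order.strict_trans2)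
  then show ?thesis using L1 by (intro L_lt1_inf)
qed

end

theorem mainTheorem15:
  fixes phiD D phi :: "real fps"
  assumes nonneg: "\<And>k. fps_nth phiD k \<ge> 0"
    and pos0: "fps_nth phiD 0 > 0"
    and posk: "\<exists>k\<ge>2. fps_nth phiD k > 0"
    and D_eq: "D = fps_X * (phiD oo D)"
    and phi_def: "phi = inverse (1 - D)"
  shows "(typeI (fps_nth phiD) \<longrightarrow>
            typeIa (fps_nth phi) \<and> nu (fps_nth phi) = \<infinity>)
       \<and> (typeII (fps_nth phiD) \<longrightarrow>
            (let \<tau> = real_of_ereal (conv_radius (fps_nth phiD));
                 \<nu>D = real_of_ereal (nu (fps_nth phiD))
             in (conv_radius (fps_nth phiD) < 1 \<longrightarrow>
                   nu (fps_nth phi) = ereal (\<tau> / ((1 - \<tau>) * (1 - \<nu>D))))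
              \<and> (conv_radius (fps_nth phiD) \<ge> 1 \<longrightarrow>
                   typeIa (fps_nth phi) \<and> nu (fps_nth phi) = \<infinity>)))
       \<and> (typeIII (fps_nth phiD) \<longrightarrow>
            nu (fps_nth phi) = 0 \<and> typeIII (fps_nth phi))"
proof -
  interpret setting phiD D phi using assms by unfold_locales auto
  show ?thesis
  proof (cases "conv_radius (fps_nth phiD) = 0")
    case True
    have nua: "nu (fps_nth phiD) = 0" using True by (simp add: nu_def)
    have nuh: "nu (fps_nth phi) = 0" using tau0(2)[OF True] by (simp add: nu_def)
    show ?thesis using nua nuh by (simp add: typeI_def typeII_def typeIII_def)
  next
    case False
    then have tp: "conv_radius (fps_nth phiD) > 0" using conv_radius_nonneg[of "fps_nth phiD"] by simp
    interpret spos phiD D phi by unfold_locales (rule tp)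
    have n3: "\<not> typeIII (fps_nth phiD)" using nu_a_pos[OF tp] by (simp add: typeIII_def)
    have n1: "typeI (fps_nth phiD) \<longrightarrow> typeIa (fps_nth phi) \<and> nu (fps_nth phi) = \<infinity>"
      using R1 by (simp add: typeI_def typeIa_def)
    have n2: "typeII (fps_nth phiD) \<longrightarrow>
            (let \<tau> = real_of_ereal (conv_radius (fps_nth phiD));
                 \<nu>D = real_of_ereal (nu (fps_nth phiD))
             in (conv_radius (fps_nth phiD) < 1 \<longrightarrow>
                   nu (fps_nth phi) = ereal (\<tau> / ((1 - \<tau>) * (1 - \<nu>D))))
              \<and> (conv_radius (fps_nth phiD) \<ge> 1 \<longrightarrow>
                   typeIa (fps_nth phi) \<and> nu (fps_nth phi) = \<infinity>))"
      using R2 R3 by (auto simp: typeII_def typeIa_def Let_def)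
    show ?thesis using n1 n2 n3 by blast
  qed
qed



end
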